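(* For all integers $n,k\ge 0$ we have $F_{n,k}\in\{0,1\}$; that is, $F$ is a $0$-$1$ matrix.
   Context: Define maps $G,S:\mathbb Z^2\to\mathbb Z^2$ by $G(x,y)=(x+y,y)$ and $S(x,y)=(3x-2y+1,\,2x-y+1)$. Define the array $(F_{n,k})_{n,k\ge 0}$ by $F_{0,0}=1$ and, for $(n,k)\neq(0,0)$, $F_{n,k}$ is the number of finite words $w=w_1w_2\cdots w_m$ ($m\ge 0$) over the alphabet $\{G,S\}$ with $w_1\circ w_2\circ\cdots\circ w_m(1,1)=(n,k)$ (the empty word acts as the identity). Equivalently: start with all entries $0$, set $F_{0,0}=1$ and $F_{1,1}=1$, and thereafter, whenever an entry $F_{n,k}$ with $n\ge 1$ changes its value, increase $F_{n+k,k}$ and $F_{3n+1-2k,\,2n+1-k}$ by $1$. *)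

theory Defs
  imports "HOL-Library.Extended_Nat"
begin

definition G_map :: "int \<times> int \<Rightarrow> int \<times> int" where
  "G_map p = (fst p + snd p, snd p)"

definition S_map :: "int \<times> int \<Rightarrow> int \<times> int" where
  "S_map p = (3 * fst p - 2 * snd p + 1, 2 * fst p - snd p + 1)"

text \<open>Words over the alphabet {G,S}: True stands for G, False for S.
  The word w1 w2 ... wm acts as the composition w1 o w2 o ... o wm.\<close>
definition letter :: "bool \<Rightarrow> int \<times> int \<Rightarrow> int \<times> int" where
  "letter b = (if b then G_map else S_map)"

definition word_act :: "bool list \<Rightarrow> int \<times> int \<Rightarrow> int \<times> int" where
  "word_act w = foldr (\<lambda>b f. letter b \<circ> f) w id"

definition F :: "nat \<Rightarrow> nat \<Rightarrow> enat" where
  "F n k = (if n = 0 \<and> k = 0 then 1 else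
     (let A = {w. word_act w (1, 1) = (int n, int k)} in
      if finite A then enat (card A) else \<infinity>))"

end

theory Submission
  imports Defs
begin

lemma wa_Nil[simp]: "word_act [] p = p"
  by (simp add: word_act_def)

lemma wa_Cons[simp]: "word_act (b # w) p = letter b (word_act w p)"
  by (simp add: word_act_def)

lemma inv_reach: "snd (word_act w (1,1)) \<ge> 1 \<and> fst (word_act w (1,1)) \<ge> snd (word_act w (1,1))"
  by (induction w) (auto simp: letter_def G_map_def S_map_def)

lemma G_img: "snd p \<ge> 1 \<Longrightarrow> fst p \<ge> snd p \<Longrightarrow> fst (G_map p) \<ge> 2 * snd (G_map p)"
  by (simp add: G_map_def)

lemma S_img: "snd p \<ge> 1 \<Longrightarrow> fst p \<ge> snd p \<Longrightarrow> snd (S_map p) \<ge> 2 * (fst (S_map p) - snd (S_map p)) + 2"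
  by (simp add: S_map_def)

lemma GS_disj: "snd p \<ge> 1 \<Longrightarrow> fst p \<ge> snd p \<Longrightarrow> snd q \<ge> 1 \<Longrightarrow> fst q \<ge> snd q \<Longrightarrow> G_map p \<noteq> S_map q"
  by (cases p; cases q) (auto simp: G_map_def S_map_def)

lemma G_inj: "G_map p = G_map q \<Longrightarrow> p = q"
  by (cases p; cases q) (auto simp: G_map_def)

lemma S_inj: "S_map p = S_map q \<Longrightarrow> p = q"
  by (cases p; cases q) (auto simp: S_map_def)

lemma wa_inj: "word_act v (1,1) = word_act w (1,1) \<Longrightarrow> v = w"
proof (induction v arbitrary: w)
  case Nil
  then show ?case
  proof (cases w)
    case (Cons c u)
    have i: "snd (word_act u (1,1)) \<ge> 1" "fst (word_act u (1,1)) \<ge> snd (word_act u (1,1))"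
      using inv_reach[of u] by auto
    have "(1,1) = letter c (word_act u (1,1))" using Nil Cons by simp
    then show ?thesis
      using G_img[OF i] S_img[OF i] by (cases c) (auto simp: letter_def)
  qed simp
next
  case (Cons b v)
  have i: "snd (word_act v (1,1)) \<ge> 1" "fst (word_act v (1,1)) \<ge> snd (word_act v (1,1))"
    using inv_reach[of v] by auto
  show ?case
  proof (cases w)
    case Nil
    have "(1,1) = letter b (word_act v (1,1))" using Cons.prems Nil by simp
    then show ?thesis
      using G_img[OF i] S_img[OF i] by (cases b) (auto simp: letter_def)
  next
    case (Cons c u)
    have j: "snd (word_act u (1,1)) \<ge> 1" "fst (word_act u (1,1)) \<ge> snd (word_act u (1,1))"
      using inv_reach[of u] by auto
    have e: "letter b (word_act v (1,1)) = letter c (word_act u (1,1))"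
      using Cons.prems Cons by simp
    have bc: "b = c"
    proof (rule ccontr)
      assume "b \<noteq> c"
      then show False using e GS_disj[OF i j] GS_disj[OF j i]
        by (cases b; cases c) (simp_all add: letter_def)
    qed
    then have "word_act v (1,1) = word_act u (1,1)"
      using e G_inj[of "word_act v (1,1)" "word_act u (1,1)"] S_inj[of "word_act v (1,1)" "word_act u (1,1)"]
      by (cases b) (simp_all add: letter_def)
    then show ?thesis using Cons.IH bc Cons by simp
  qed
qed

theorem corollary5:
  shows "\<forall>n k. F n k \<in> {0, 1}"
proof (intro allI)
  fix n k
  define A where "A = {w. word_act w (1, 1) = (int n, int k)}"
  have sub: "A \<subseteq> {w0}" if "w0 \<in> A" for w0
    using that wa_inj unfolding A_def by (metis (mono_tags) mem_Collect_eq singletonI subsetI)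
  have fin: "finite A"
  proof (cases "A = {}")
    case False
    then obtain w0 where "w0 \<in> A" by auto
    then have "A \<subseteq> {w0}" by (rule sub)
    then show ?thesis by (rule finite_subset) simp
  qed simp
  have "card A \<le> 1"
  proof (cases "A = {}")
    case False
    then obtain w0 where "w0 \<in> A" by auto
    then have "A \<subseteq> {w0}" by (rule sub)
    then have "card A \<le> card {w0}" by (intro card_mono) auto
    then show ?thesis by simp
  qed simp
  then have "card A = 0 \<or> card A = 1" by auto
  then show "F n k \<in> {0, 1}"
    unfolding F_def Let_def A_def[symmetric] using fin by (auto simp: zero_enat_def one_enat_def)
qed

end
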